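(* For every $n\geq1$, the RBM variety $V^1_n$ coincides with the first secant variety (the Zariski closure of the union of all secant lines) of the Segre embedding of $(\mathbb{P}^1)^n$ into $\mathbb{P}^{2^n-1}$, and the tropical RBM variety $TV^1_n$ is the tropicalization of that secant variety.
   Context: The RBM model $M^1_n$ is the subset of the open simplex $\Delta_{2^n-1}$ consisting of all vectors $(p(v))_{v\in\{0,1\}^n}$ with $p(v)=\frac1Z\beta_1^{v_1}\cdots\beta_n^{v_n}(1+\gamma\,\omega_1^{v_1}\cdots\omega_n^{v_n})$, where all parameters range over $\mathbb{R}_{>0}$ and $Z$ normalizes the coordinates to sum to one. The RBM variety $V^1_n$ is the Zariski closure of $M^1_n$ in the complex projective space $\mathbb{P}^{2^n-1}$ (coordinates indexed by $v\in\{0,1\}^n$), and the tropical RBM variety $TV^1_n\subseteq\mathbb{R}^{2^n}/\mathbb{R}(1,\dots,1)$ is the tropicalization of $V^1_n$, i.e. the intersection of the tropical hypersurfaces of all polynomials vanishing on $V^1_n$. The Segre embedding sends $((x_0^{(1)}:x_1^{(1)}),\dots,(x_0^{(n)}:x_1^{(n)}))$ to the point with coordinates $\prod_i x^{(i)}_{v_i}$, $v\in\{0,1\}^n$. *)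

theory Defs
  imports "HOL-Analysis.Analysis" "HOL-Library.Poly_Mapping"
begin

text \<open>Index set \{0,1\}^n: lists of length n with entries 0 or 1 (entry i is v_(i+1)).\<close>
definition cube :: "nat \<Rightarrow> nat list set" where
  "cube n = {v. length v = n \<and> (\<forall>i<n. v ! i \<le> 1)}"

text \<open>Vectors in C^(2^n): functions on index lists, zero outside the cube.\<close>
definition pts :: "nat \<Rightarrow> (nat list \<Rightarrow> complex) set" where
  "pts n = {x. \<forall>v. v \<notin> cube n \<longrightarrow> x v = 0}"

type_synonym mpoly = "(nat list \<Rightarrow>\<^sub>0 nat) \<Rightarrow>\<^sub>0 complex"

definition peval :: "mpoly \<Rightarrow> (nat list \<Rightarrow> complex) \<Rightarrow> complex" where
  "peval f x = (\<Sum>m\<in>Poly_Mapping.keys f. Poly_Mapping.lookup f m * (\<Prod>v\<in>Poly_Mapping.keys m. x v ^ Poly_Mapping.lookup m v))"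

definition poly_in :: "nat \<Rightarrow> mpoly \<Rightarrow> bool" where
  "poly_in n f \<longleftrightarrow> (\<forall>m\<in>Poly_Mapping.keys f. Poly_Mapping.keys m \<subseteq> cube n)"

definition homogeneous :: "mpoly \<Rightarrow> bool" where
  "homogeneous f \<longleftrightarrow> (\<exists>d. \<forall>m\<in>Poly_Mapping.keys f. (\<Sum>v\<in>Poly_Mapping.keys m. Poly_Mapping.lookup m v) = d)"

text \<open>Zariski closure in P^(2^n-1); projective points represented by their nonzero
  representative vectors (so the result is closed under nonzero scaling).\<close>
definition zariski_closure :: "nat \<Rightarrow> (nat list \<Rightarrow> complex) set \<Rightarrow> (nat list \<Rightarrow> complex) set" where
  "zariski_closure n S = {x \<in> pts n. (\<exists>v. x v \<noteq> 0) \<and>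
     (\<forall>f. poly_in n f \<and> homogeneous f \<and> (\<forall>y\<in>S. peval f y = 0) \<longrightarrow> peval f x = 0)}"

definition rbm_model :: "nat \<Rightarrow> (nat list \<Rightarrow> complex) set" where
  "rbm_model n = {p. \<exists>(\<beta>::nat \<Rightarrow> real) (\<omega>::nat \<Rightarrow> real) (\<gamma>::real).
     (\<forall>i<n. \<beta> i > 0 \<and> \<omega> i > 0) \<and> \<gamma> > 0 \<and>
     (let u = (\<lambda>v. (\<Prod>i<n. \<beta> i ^ (v ! i)) * (1 + \<gamma> * (\<Prod>i<n. \<omega> i ^ (v ! i))));
          Z = (\<Sum>v\<in>cube n. u v)
      in p = (\<lambda>v. if v \<in> cube n then complex_of_real (u v / Z) else 0))}"

definition rbm_variety :: "nat \<Rightarrow> (nat list \<Rightarrow> complex) set" where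
  "rbm_variety n = zariski_closure n (rbm_model n)"

definition segre :: "nat \<Rightarrow> (nat list \<Rightarrow> complex) set" where
  "segre n = {x. \<exists>a b :: nat \<Rightarrow> complex. (\<forall>i<n. a i \<noteq> 0 \<or> b i \<noteq> 0) \<and>
     x = (\<lambda>v. if v \<in> cube n then (\<Prod>i<n. if v ! i = 0 then a i else b i) else 0)}"

definition secant_union :: "nat \<Rightarrow> (nat list \<Rightarrow> complex) set" where
  "secant_union n = {x. (\<exists>v. x v \<noteq> 0) \<and> (\<exists>s\<in>segre n. \<exists>t\<in>segre n. (\<forall>c::complex. s \<noteq> (\<lambda>v. c * t v)) \<and>
     (\<exists>c1 c2 :: complex. x = (\<lambda>v. c1 * s v + c2 * t v)))}"

definition secant_variety :: "nat \<Rightarrow> (nat list \<Rightarrow> complex) set" where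
  "secant_variety n = zariski_closure n (secant_union n)"

text \<open>Tropical hypersurface of a polynomial over C (trivial valuation), min convention.\<close>
definition wdot :: "(nat list \<Rightarrow> real) \<Rightarrow> (nat list \<Rightarrow>\<^sub>0 nat) \<Rightarrow> real" where
  "wdot w m = (\<Sum>v\<in>Poly_Mapping.keys m. w v * real (Poly_Mapping.lookup m v))"

definition trop_hypersurface :: "mpoly \<Rightarrow> (nat list \<Rightarrow> real) set" where
  "trop_hypersurface f = {w. \<exists>m1\<in>Poly_Mapping.keys f. \<exists>m2\<in>Poly_Mapping.keys f. m1 \<noteq> m2 \<and>
     wdot w m1 = wdot w m2 \<and> (\<forall>m\<in>Poly_Mapping.keys f. wdot w m1 \<le> wdot w m)}"

text \<open>Weight vectors live in R^(2^n) (zero outside the cube);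
  the resulting set is invariant under adding multiples of (1,...,1), i.e. it is the full preimage
  of the subset of R^(2^n)/R(1,...,1).\<close>
definition tropicalization :: "nat \<Rightarrow> (nat list \<Rightarrow> complex) set \<Rightarrow> (nat list \<Rightarrow> real) set" where
  "tropicalization n X = {w. (\<forall>v. v \<notin> cube n \<longrightarrow> w v = 0) \<and>
     (\<forall>f. poly_in n f \<and> f \<noteq> 0 \<and> (\<forall>x\<in>X. peval f x = 0) \<longrightarrow> w \<in> trop_hypersurface f)}"

end

theory Submission
  imports Defs "HOL-Computational_Algebra.Polynomial"
begin

definition ispoly :: "(complex \<Rightarrow> complex) \<Rightarrow> bool" where
  "ispoly h \<longleftrightarrow> (\<exists>p. \<forall>z. h z = poly p z)"

lemma ispoly_const[simp]: "ispoly (\<lambda>z. c)"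
  unfolding ispoly_def by (rule exI[of _ "[:c:]"]) simp

lemma ispoly_id[simp]: "ispoly (\<lambda>z. z)"
  unfolding ispoly_def by (rule exI[of _ "[:0,1:]"]) simp

lemma ispoly_add[intro]: "ispoly f \<Longrightarrow> ispoly g \<Longrightarrow> ispoly (\<lambda>z. f z + g z)"
  unfolding ispoly_def by (metis poly_add)

lemma ispoly_mult[intro]: "ispoly f \<Longrightarrow> ispoly g \<Longrightarrow> ispoly (\<lambda>z. f z * g z)"
  unfolding ispoly_def by (metis poly_mult)

lemma ispoly_power[intro]: "ispoly f \<Longrightarrow> ispoly (\<lambda>z. f z ^ k)"
  by (induction k) auto

lemma ispoly_if[intro]: "ispoly f \<Longrightarrow> ispoly g \<Longrightarrow> ispoly (\<lambda>z. if P then f z else g z)"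
  by (cases P) auto

lemma ispoly_sum[intro]: "(\<And>a. a \<in> A \<Longrightarrow> ispoly (f a)) \<Longrightarrow> ispoly (\<lambda>z. \<Sum>a\<in>A. f a z)"
proof (induction A rule: infinite_finite_induct)
  case (insert x F) then show ?case by (simp add: ispoly_add)
qed auto

lemma ispoly_prod[intro]: "(\<And>a. a \<in> A \<Longrightarrow> ispoly (f a)) \<Longrightarrow> ispoly (\<lambda>z. \<Prod>a\<in>A. f a z)"
proof (induction A rule: infinite_finite_induct)
  case (insert x F) then show ?case by (simp add: ispoly_mult)
qed auto

lemma ispoly_peval:
  assumes "\<And>v. ispoly (\<lambda>z. X z v)"
  shows "ispoly (\<lambda>z. peval f (X z))"
  unfolding peval_def using assms by (intro ispoly_sum ispoly_mult ispoly_prod ispoly_power) auto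

lemma ispoly_upd: "ispoly (\<lambda>z. (u(k := z)) j)"
  by (cases "j = k") auto

definition pos :: "complex \<Rightarrow> bool" where "pos c \<longleftrightarrow> (\<exists>r>0. c = of_real r)"

lemma ispoly_zero_inf:
  assumes "ispoly h" "\<And>j::nat. h (of_nat (Suc j)) = 0"
  shows "h z = 0"
proof -
  obtain p where p: "\<And>z. h z = poly p z" using assms(1) unfolding ispoly_def by blast
  have "range (\<lambda>j::nat. (of_nat (Suc j)::complex)) \<subseteq> {x. poly p x = 0}"
    using assms(2) p by auto
  moreover have "infinite (range (\<lambda>j::nat. (of_nat (Suc j)::complex)))"
    by (rule range_inj_infinite) (auto simp: inj_def)
  ultimately have "infinite {x. poly p x = 0}" using finite_subset by blast
  then have "p = 0" using poly_roots_finite by blast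
  then show ?thesis using p by simp
qed

lemma identity_thm:
  fixes g :: "(nat \<Rightarrow> complex) \<Rightarrow> complex"
  assumes pol: "\<And>u k. ispoly (\<lambda>z. g (u(k := z)))"
    and hyp: "\<And>u. (\<forall>i<K. pos (u i)) \<Longrightarrow> g u = 0"
  shows "g u = 0"
proof -
  have "\<forall>u. (\<forall>i. k \<le> i \<and> i < K \<longrightarrow> pos (u i)) \<longrightarrow> g u = 0" for k
  proof (induction k)
    case 0 then show ?case using hyp by auto
  next
    case (Suc k)
    show ?case
    proof (intro allI impI)
      fix u assume u: "\<forall>i. Suc k \<le> i \<and> i < K \<longrightarrow> pos (u i)"
      have "g (u(k := z)) = 0" for z
      proof (rule ispoly_zero_inf[where h = "\<lambda>z. g (u(k := z))", OF pol])
        fix j :: nat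
        have "pos (of_nat (Suc j))" unfolding pos_def
          by (rule exI[of _ "real (Suc j)"]) simp
        then show "g (u(k := of_nat (Suc j))) = 0"
          using Suc.IH u by (metis fun_upd_apply not_less_eq_eq le_antisym)
      qed
      from this[of "u k"] show "g u = 0" by simp
    qed
  qed
  from this[of K] show ?thesis by auto
qed

lemma peval_scale:
  assumes "homogeneous f"
  shows "\<exists>d. \<forall>c x. peval f (\<lambda>v. c * x v) = c ^ d * peval f x"
proof -
  obtain d where d: "\<And>m. m \<in> Poly_Mapping.keys f \<Longrightarrow> (\<Sum>v\<in>Poly_Mapping.keys m. Poly_Mapping.lookup m v) = d"
    using assms unfolding homogeneous_def by blast
  have "peval f (\<lambda>v. c * x v) = c ^ d * peval f x" for c x
  proof -
    have "peval f (\<lambda>v. c * x v) = (\<Sum>m\<in>Poly_Mapping.keys f. c ^ d * (Poly_Mapping.lookup f m * (\<Prod>v\<in>Poly_Mapping.keys m. x v ^ Poly_Mapping.lookup m v)))"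
      unfolding peval_def
    proof (rule sum.cong[OF refl])
      fix m assume m: "m \<in> Poly_Mapping.keys f"
      have "(\<Prod>v\<in>Poly_Mapping.keys m. (c * x v) ^ Poly_Mapping.lookup m v)
          = (\<Prod>v\<in>Poly_Mapping.keys m. c ^ Poly_Mapping.lookup m v) * (\<Prod>v\<in>Poly_Mapping.keys m. x v ^ Poly_Mapping.lookup m v)"
        by (simp add: power_mult_distrib prod.distrib)
      also have "(\<Prod>v\<in>Poly_Mapping.keys m. c ^ Poly_Mapping.lookup m v) = c ^ d"
        using d[OF m] by (metis power_sum)
      finally show "Poly_Mapping.lookup f m * (\<Prod>v\<in>Poly_Mapping.keys m. (c * x v) ^ Poly_Mapping.lookup m v) =
         c ^ d * (Poly_Mapping.lookup f m * (\<Prod>v\<in>Poly_Mapping.keys m. x v ^ Poly_Mapping.lookup m v))"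
        by simp
    qed
    also have "\<dots> = c ^ d * peval f x" unfolding peval_def by (simp add: sum_distrib_left)
    finally show ?thesis .
  qed
  then show ?thesis by blast
qed

lemma cube_finite: "finite (cube n)"
proof -
  have "cube n \<subseteq> {xs. set xs \<subseteq> {0,1} \<and> length xs = n}"
  proof
    fix v assume v: "v \<in> cube n"
    have "set v \<subseteq> {0,1}"
    proof
      fix x assume "x \<in> set v"
      then obtain i where "i < length v" "v ! i = x" by (auto simp: in_set_conv_nth)
      then have "x \<le> 1" using v unfolding cube_def by auto
      then show "x \<in> {0,1}" by auto
    qed
    then show "v \<in> {xs. set xs \<subseteq> {0,1} \<and> length xs = n}" using v unfolding cube_def by auto
  qed
  then show ?thesis using finite_lists_length_eq[of "{0::nat,1}" n] finite_subset by blast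
qed

lemma zero_in_cube: "replicate n 0 \<in> cube n"
  unfolding cube_def by simp

lemma prod_split:
  fixes a b :: "nat \<Rightarrow> real"
  assumes "v \<in> cube n" "\<And>i. i < n \<Longrightarrow> a i > 0"
  shows "(\<Prod>i<n. if v ! i = 0 then a i else b i) = (\<Prod>i<n. a i) * (\<Prod>i<n. (b i / a i) ^ (v ! i))"
proof -
  have "(\<Prod>i<n. if v ! i = 0 then a i else b i) = (\<Prod>i<n. a i * (b i / a i) ^ (v ! i))"
  proof (rule prod.cong[OF refl])
    fix i assume "i \<in> {..<n}"
    then have "v ! i \<le> 1" "a i > 0" using assms unfolding cube_def by auto
    then show "(if v ! i = 0 then a i else b i) = a i * (b i / a i) ^ (v ! i)"
      by (cases "v ! i") auto
  qed
  then show ?thesis by (simp add: prod.distrib)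
qed

lemma pow01:
  fixes x :: real
  assumes "v \<in> cube n" "i < n"
  shows "x ^ (v ! i) = (if v ! i = 0 then 1 else x)"
proof -
  have "v ! i \<le> 1" using assms unfolding cube_def by auto
  then show ?thesis by (cases "v ! i") auto
qed

lemma alg:
  fixes r4 Pa Pb Pw r41 Pc :: real
  assumes "r4 * Pa \<noteq> 0"
  shows "r4 * Pa * (Pb * (1 + r41 * Pc / (r4 * Pa) * Pw)) = r4 * (Pa * Pb) + r41 * (Pc * (Pb * Pw))"
  using assms by (simp add: field_simps)

definition G :: "nat \<Rightarrow> (nat \<Rightarrow> complex) \<Rightarrow> nat list \<Rightarrow> complex" where
  "G n u v = (if v \<in> cube n then u (4*n) * (\<Prod>i<n. if v ! i = 0 then u i else u (n+i))
      + u (4*n+1) * (\<Prod>i<n. if v ! i = 0 then u (2*n+i) else u (3*n+i)) else 0)"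

lemma G_pos:
  fixes r :: "nat \<Rightarrow> real"
  assumes r: "\<And>i. i < 4*n+2 \<Longrightarrow> r i > 0"
  shows "\<exists>p\<in>rbm_model n. \<exists>L::real. L > 0 \<and> G n (\<lambda>i. complex_of_real (r i)) = (\<lambda>v. complex_of_real L * p v)"
proof -
  define \<beta> where "\<beta> i = r (n+i) / r i" for i
  define \<omega> where "\<omega> i = (r (3*n+i) / r (2*n+i)) / \<beta> i" for i
  define \<gamma> where "\<gamma> = r (4*n+1) * (\<Prod>i<n. r (2*n+i)) / (r (4*n) * (\<Prod>i<n. r i))"
  define A where "A = r (4*n) * (\<Prod>i<n. r i)"
  define uu where "uu = (\<lambda>v. (\<Prod>i<n. \<beta> i ^ (v ! i)) * (1 + \<gamma> * (\<Prod>i<n. \<omega> i ^ (v ! i))))"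
  define Z where "Z = (\<Sum>v\<in>cube n. uu v)"
  define p where "p = (\<lambda>v. if v \<in> cube n then complex_of_real (uu v / Z) else 0)"
  have bpos: "\<beta> i > 0" "\<omega> i > 0" if "i < n" for i
    using r[of i] r[of "n+i"] r[of "2*n+i"] r[of "3*n+i"] that unfolding \<beta>_def \<omega>_def by auto
  have P1: "(\<Prod>i<n. r i) > 0" "(\<Prod>i<n. r (2*n+i)) > 0" using r by (auto intro!: prod_pos)
  have R4: "r (4*n) > 0" "r (4*n+1) > 0" using r by auto
  have Apos: "A > 0" unfolding A_def using P1 R4 by simp
  have gpos: "\<gamma> > 0" unfolding \<gamma>_def using P1 R4 by simp
  have uupos: "uu v > 0" for v unfolding uu_def using bpos gpos
    by (auto intro!: prod_pos mult_pos_pos add_pos_pos)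
  have Zpos: "Z > 0" unfolding Z_def using cube_finite zero_in_cube uupos
    by (intro sum_pos) auto
  have "p \<in> rbm_model n"
    unfolding rbm_model_def mem_Collect_eq
    apply (rule exI[of _ \<beta>], rule exI[of _ \<omega>], rule exI[of _ \<gamma>])
    apply (intro conjI)
    using bpos gpos apply auto[2]
    unfolding p_def Z_def uu_def Let_def by (rule refl)
  moreover have "G n (\<lambda>i. complex_of_real (r i)) = (\<lambda>v. complex_of_real (A * Z) * p v)"
  proof
    fix v :: "nat list"
    show "G n (\<lambda>i. complex_of_real (r i)) v = complex_of_real (A * Z) * p v"
    proof (cases "v \<in> cube n")
      case False then show ?thesis unfolding G_def p_def by simp
    next
      case True
      have e1: "(\<Prod>i<n. if v ! i = 0 then r i else r (n+i)) = (\<Prod>i<n. r i) * (\<Prod>i<n. \<beta> i ^ (v ! i))"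
        unfolding \<beta>_def using prod_split[OF True, of r] r by simp
      have e2: "(\<Prod>i<n. if v ! i = 0 then r (2*n+i) else r (3*n+i)) = (\<Prod>i<n. r (2*n+i)) * (\<Prod>i<n. (r (3*n+i) / r (2*n+i)) ^ (v ! i))"
        using prod_split[OF True, of "\<lambda>i. r (2*n+i)"] r by simp
      have e3: "(\<Prod>i<n. \<beta> i ^ (v ! i)) * (\<Prod>i<n. \<omega> i ^ (v ! i)) = (\<Prod>i<n. (r (3*n+i) / r (2*n+i)) ^ (v ! i))"
        unfolding prod.distrib[symmetric]
        proof (rule prod.cong[OF refl])
          fix i assume "i \<in> {..<n}"
          then have "\<beta> i > 0" using bpos by auto
          then have "\<beta> i * \<omega> i = r (3*n+i) / r (2*n+i)" unfolding \<omega>_def by simp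
          then show "\<beta> i ^ (v ! i) * \<omega> i ^ (v ! i) = (r (3*n+i) / r (2*n+i)) ^ (v ! i)"
            by (metis power_mult_distrib)
        qed
      define RHS where "RHS = r (4*n) * (\<Prod>i<n. if v ! i = 0 then r i else r (n+i))
          + r (4*n+1) * (\<Prod>i<n. if v ! i = 0 then r (2*n+i) else r (3*n+i))"
      have eqA: "A * uu v = RHS"
        unfolding RHS_def e1 e2 e3[symmetric] uu_def A_def \<gamma>_def
        by (rule alg) (use P1 R4 in \<open>simp del: prod_zero_iff\<close>)
      have m1: "(A * Z) * (uu v / Z) = A * uu v" using Zpos by simp
      have "complex_of_real (A * Z) * p v = complex_of_real (A * Z) * complex_of_real (uu v / Z)"
        using True unfolding p_def by simp
      also have "\<dots> = complex_of_real ((A * Z) * (uu v / Z))" by (simp only: of_real_mult)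
      also have "\<dots> = complex_of_real RHS" by (simp only: m1 eqA)
      finally have lhs: "complex_of_real (A * Z) * p v = complex_of_real RHS" .
      have geq: "G n (\<lambda>i. complex_of_real (r i)) v = complex_of_real RHS"
        unfolding G_def RHS_def using True by (simp add: of_real_prod if_distrib)
      show ?thesis unfolding geq lhs ..
    qed
  qed
  moreover have "A * Z > 0" using Apos Zpos by simp
  ultimately show ?thesis by blast
qed

lemma vanish_G:
  assumes hom: "homogeneous f" and van: "\<forall>p\<in>rbm_model n. peval f p = 0"
  shows "peval f (G n u) = 0"
proof -
  obtain d where d: "\<And>c x. peval f (\<lambda>v. c * x v) = c ^ d * peval f x"
    using peval_scale[OF hom] by blast
  show ?thesis
  proof (rule identity_thm[where g = "\<lambda>u. peval f (G n u)" and K = "4*n+2"])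
    fix u k
    show "ispoly (\<lambda>z. peval f (G n (u(k := z))))"
    proof (rule ispoly_peval)
      fix v show "ispoly (\<lambda>z. G n (u(k := z)) v)"
        unfolding G_def by (intro ispoly_if ispoly_add ispoly_mult ispoly_prod ispoly_upd ispoly_const)
    qed
  next
    fix u assume u: "\<forall>i<4*n+2. pos (u i)"
    define r where "r i = (if i < 4*n+2 then Re (u i) else 1)" for i
    have hu: "u j = complex_of_real (r j)" if "j < 4*n+2" for j
      using u that unfolding r_def pos_def by auto
    have rpos: "r i > 0" if "i < 4*n+2" for i
      using u that unfolding r_def pos_def by auto
    have "G n u = G n (\<lambda>i. complex_of_real (r i))"
      unfolding G_def
      by (intro ext if_cong refl arg_cong2[where f="(+)"] arg_cong2[where f="(*)"] prod.cong)
         (use hu in auto)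
    moreover obtain p L where p: "p \<in> rbm_model n" "G n (\<lambda>i. complex_of_real (r i)) = (\<lambda>v. complex_of_real L * p v)"
      using G_pos[of n r] rpos by blast
    ultimately show "peval f (G n u) = 0" using d van by simp
  qed
qed

lemma secant_G:
  assumes "x \<in> secant_union n"
  shows "\<exists>u. x = G n u"
proof -
  obtain s t c1 c2 where st: "s \<in> segre n" "t \<in> segre n" and x: "x = (\<lambda>v. c1 * s v + c2 * t v)"
    using assms unfolding secant_union_def by blast
  obtain a b where s: "s = (\<lambda>v. if v \<in> cube n then (\<Prod>i<n. if v ! i = 0 then a i else b i) else 0)"
    using st(1) unfolding segre_def by blast
  obtain a' b' where t: "t = (\<lambda>v. if v \<in> cube n then (\<Prod>i<n. if v ! i = 0 then a' i else b' i) else 0)"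
    using st(2) unfolding segre_def by blast
  define u where "u j = (if j < n then a j else if j < 2*n then b (j-n) else if j < 3*n then a' (j-2*n)
     else if j < 4*n then b' (j-3*n) else if j = 4*n then c1 else c2)" for j
  have "x = G n u"
  proof
    fix v :: "nat list"
    have p1: "(\<Prod>i<n. if v ! i = 0 then u i else u (n+i)) = (\<Prod>i<n. if v ! i = 0 then a i else b i)"
      by (rule prod.cong) (auto simp: u_def)
    have p2: "(\<Prod>i<n. if v ! i = 0 then u (2*n+i) else u (3*n+i)) = (\<Prod>i<n. if v ! i = 0 then a' i else b' i)"
      by (rule prod.cong) (auto simp: u_def)
    show "x v = G n u v" unfolding G_def p1 p2 x s t by (simp add: u_def)
  qed
  then show ?thesis by blast
qed

lemma rbm_sec:
  assumes n: "n \<ge> 1" and pm: "p \<in> rbm_model n"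
  shows "p \<in> secant_union n"
proof -
  obtain \<beta> \<omega> :: "nat \<Rightarrow> real" and \<gamma> :: real where pos: "\<forall>i<n. \<beta> i > 0 \<and> \<omega> i > 0" "\<gamma> > 0"
    and p: "p = (\<lambda>v. if v \<in> cube n then complex_of_real
        ((\<Prod>i<n. \<beta> i ^ (v ! i)) * (1 + \<gamma> * (\<Prod>i<n. \<omega> i ^ (v ! i))) /
         (\<Sum>v\<in>cube n. (\<Prod>i<n. \<beta> i ^ (v ! i)) * (1 + \<gamma> * (\<Prod>i<n. \<omega> i ^ (v ! i))))) else 0)"
    using pm unfolding rbm_model_def Let_def by blast
  define uu where "uu = (\<lambda>v. (\<Prod>i<n. \<beta> i ^ (v ! i)) * (1 + \<gamma> * (\<Prod>i<n. \<omega> i ^ (v ! i))))"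
  define Z where "Z = (\<Sum>v\<in>cube n. uu v)"
  have p': "p = (\<lambda>v. if v \<in> cube n then complex_of_real (uu v / Z) else 0)"
    unfolding p uu_def Z_def ..
  have uupos: "uu v > 0" for v unfolding uu_def using pos
    by (auto intro!: prod_pos mult_pos_pos add_pos_pos)
  have Zpos: "Z > 0" unfolding Z_def using cube_finite zero_in_cube uupos
    by (intro sum_pos) auto
  define Sr where "Sr (v::nat list) = (\<Prod>i<n. if v ! i = 0 then 1 else \<beta> i)" for v
  define Tr where "Tr (v::nat list) = (\<Prod>i<n. if v ! i = 0 then 1 else \<beta> i * \<omega> i)" for v
  define s where "s = (\<lambda>v. if v \<in> cube n then (\<Prod>i<n. if v ! i = 0 then (1::complex) else complex_of_real (\<beta> i)) else 0)"
  define t where "t = (\<lambda>v. if v \<in> cube n then (\<Prod>i<n. if v ! i = 0 then (1::complex) else complex_of_real (\<beta> i * \<omega> i)) else 0)"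
  define e where "e = (\<lambda>v. if v \<in> cube n then (\<Prod>i<n. if v ! i = 0 then (1::complex) else 0) else 0)"
  have sseg: "s \<in> segre n" unfolding segre_def s_def by (rule CollectI, rule exI[of _ "\<lambda>_. 1"], rule exI, auto)
  have tseg: "t \<in> segre n" unfolding segre_def t_def by (rule CollectI, rule exI[of _ "\<lambda>_. 1"], rule exI, auto)
  have eseg: "e \<in> segre n" unfolding segre_def e_def by (rule CollectI, rule exI[of _ "\<lambda>_. 1"], rule exI, auto)
  have sS: "s v = (if v \<in> cube n then complex_of_real (Sr v) else 0)" for v
    unfolding s_def Sr_def of_real_prod by (auto intro!: prod.cong)
  have tT: "t v = (if v \<in> cube n then complex_of_real (Tr v) else 0)" for v
    unfolding t_def Tr_def of_real_prod by (auto intro!: prod.cong)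
  have real_eq: "uu v / Z = (1/Z) * Sr v + (\<gamma>/Z) * Tr v" if v: "v \<in> cube n" for v
  proof -
    have a: "(\<Prod>i<n. \<beta> i ^ (v ! i)) = Sr v" unfolding Sr_def
      by (rule prod.cong[OF refl]) (use pow01[OF v] in auto)
    have b: "(\<Prod>i<n. \<beta> i ^ (v ! i)) * (\<Prod>i<n. \<omega> i ^ (v ! i)) = Tr v" unfolding Tr_def prod.distrib[symmetric]
      by (rule prod.cong[OF refl]) (use pow01[OF v] in auto)
    have "uu v = Sr v + \<gamma> * Tr v" unfolding uu_def a[symmetric] b[symmetric] by (simp add: algebra_simps)
    then show ?thesis by (simp add: add_divide_distrib)
  qed
  have pst: "p = (\<lambda>v. complex_of_real (1/Z) * s v + complex_of_real (\<gamma>/Z) * t v)"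
  proof
    fix v :: "nat list"
    show "p v = complex_of_real (1/Z) * s v + complex_of_real (\<gamma>/Z) * t v"
    proof (cases "v \<in> cube n")
      case True
      then show ?thesis unfolding p' sS tT using real_eq[OF True] by (simp add: of_real_add of_real_mult of_real_divide)
    qed (simp add: p' sS tT)
  qed
  have nz: "\<exists>v. p v \<noteq> 0"
    using zero_in_cube[of n] uupos[of "replicate n 0"] Zpos unfolding p' by (intro exI[of _ "replicate n 0"]) simp
  show ?thesis
  proof (cases "\<exists>c. s = (\<lambda>v. c * t v)")
    case False
    then show ?thesis unfolding secant_union_def using nz sseg tseg pst by blast
  next
    case True
    then obtain c where c: "s = (\<lambda>v. c * t v)" by blast
    have pt: "p = (\<lambda>v. 0 * e v + (complex_of_real (1/Z) * c + complex_of_real (\<gamma>/Z)) * t v)"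
      unfolding pst c by (simp add: algebra_simps)
    define v1 where "v1 = (1::nat) # replicate (n - 1) 0"
    have v1c: "v1 \<in> cube n" unfolding v1_def cube_def using n by (auto simp: nth_Cons')
    have e1: "e v1 = 0" unfolding e_def using v1c n
      by (auto simp: v1_def intro!: bexI[of _ 0])
    have t1: "t v1 \<noteq> 0" unfolding t_def using v1c pos by auto
    have e0: "e (replicate n 0) = 1" unfolding e_def using zero_in_cube[of n] by simp
    have ne: "\<forall>c'. e \<noteq> (\<lambda>v. c' * t v)"
    proof (intro allI notI)
      fix c' assume h: "e = (\<lambda>v. c' * t v)"
      then have "c' = 0" using e1 t1 by (metis mult_eq_0_iff)
      then show False using e0 h by simp
    qed
    show ?thesis unfolding secant_union_def using nz eseg tseg ne pt by blast
  qed
qed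

lemma ideal_eq:
  assumes n: "n \<ge> 1" and hom: "homogeneous f"
  shows "(\<forall>y\<in>rbm_model n. peval f y = 0) \<longleftrightarrow> (\<forall>y\<in>secant_union n. peval f y = 0)"
proof
  assume h: "\<forall>y\<in>rbm_model n. peval f y = 0"
  show "\<forall>y\<in>secant_union n. peval f y = 0"
  proof
    fix y assume "y \<in> secant_union n"
    then obtain u where "y = G n u" using secant_G by blast
    then show "peval f y = 0" using vanish_G[OF hom h] by simp
  qed
next
  assume "\<forall>y\<in>secant_union n. peval f y = 0"
  then show "\<forall>y\<in>rbm_model n. peval f y = 0" using rbm_sec[OF n] by blast
qed

theorem corollary3p2:
  fixes n :: nat
  assumes "n \<ge> 1"
  shows "rbm_variety n = secant_variety n \<and>
         tropicalization n (rbm_variety n) = tropicalization n (secant_variety n)"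
proof -
  have "rbm_variety n = secant_variety n"
    unfolding rbm_variety_def secant_variety_def zariski_closure_def
  proof -
    have "\<And>f. (poly_in n f \<and> homogeneous f \<and> (\<forall>y\<in>rbm_model n. peval f y = 0)) =
              (poly_in n f \<and> homogeneous f \<and> (\<forall>y\<in>secant_union n. peval f y = 0))"
      using ideal_eq[OF assms] by blast
    then show "{x \<in> pts n. (\<exists>v. x v \<noteq> 0) \<and> (\<forall>f. poly_in n f \<and> homogeneous f \<and> (\<forall>y\<in>rbm_model n. peval f y = 0) \<longrightarrow> peval f x = 0)} =
      {x \<in> pts n. (\<exists>v. x v \<noteq> 0) \<and> (\<forall>f. poly_in n f \<and> homogeneous f \<and> (\<forall>y\<in>secant_union n. peval f y = 0) \<longrightarrow> peval f x = 0)}"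
      by (simp only:)
  qed
  then show ?thesis by simp
qed

end
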